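(* Let $I$ be a finite index set and let $\mathcal{F}:=\bigcup_{i\in I}\{p_i,p_i'\}$ be a family of vectors in $\mathbb{R}^d$ such that: (i) there is a nonzero vector $c$ with $(p_i+p_i')/2=c$ for all $i\in I$; (ii) $\langle p_i,p_i'\rangle=0$ for all $i\in I$; (iii) there is a subset $J\subseteq I$ of odd cardinality with $\sum_{j\in J}p_j=|J|\,c$; (iv) all pairwise inner products of vectors in $\mathcal{F}$ are nonnegative. Then the Gram matrix $\mathrm{Gram}(\mathcal{F})$ is doubly nonnegative but not completely positive.
   Context: $\mathrm{Gram}(\mathcal{F})$ is the matrix indexed by the members of the family $\mathcal{F}$ (with the $2|I|$ vectors $p_i,p_i'$, $i\in I$, as indices) whose entries are the pairwise inner products. A real symmetric matrix is doubly nonnegative if it is positive semidefinite and entrywise nonnegative. An $N\times N$ matrix $X$ is completely positive if there exist $k\ge1$ and entrywise nonnegative vectors $a_1,\dots,a_N\in\mathbb{R}^k_+$ with $X_{ij}=\langle a_i,a_j\rangle$ for all $i,j$. *)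

theory Defs
  imports "HOL-Analysis.Analysis"
begin

text \<open>The family F: index (i, False) stands for p_i, index (i, True) for p_i'.
  The index set of the family is I \<times> UNIV (2|I| indices).\<close>
definition family :: "('i \<Rightarrow> 'v) \<Rightarrow> ('i \<Rightarrow> 'v) \<Rightarrow> 'i \<times> bool \<Rightarrow> 'v" where
  "family p p' = (\<lambda>(i, b). if b then p' i else p i)"

definition gram :: "('k \<Rightarrow> 'v::real_inner) \<Rightarrow> 'k \<Rightarrow> 'k \<Rightarrow> real" where
  "gram v = (\<lambda>a b. inner (v a) (v b))"

definition symmetric_on :: "'k set \<Rightarrow> ('k \<Rightarrow> 'k \<Rightarrow> real) \<Rightarrow> bool" where
  "symmetric_on S X \<longleftrightarrow> (\<forall>a\<in>S. \<forall>b\<in>S. X a b = X b a)"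

definition psd_on :: "'k set \<Rightarrow> ('k \<Rightarrow> 'k \<Rightarrow> real) \<Rightarrow> bool" where
  "psd_on S X \<longleftrightarrow> symmetric_on S X \<and>
     (\<forall>x :: 'k \<Rightarrow> real. 0 \<le> (\<Sum>a\<in>S. \<Sum>b\<in>S. x a * X a b * x b))"

definition doubly_nonnegative_on :: "'k set \<Rightarrow> ('k \<Rightarrow> 'k \<Rightarrow> real) \<Rightarrow> bool" where
  "doubly_nonnegative_on S X \<longleftrightarrow> psd_on S X \<and> (\<forall>a\<in>S. \<forall>b\<in>S. 0 \<le> X a b)"

definition completely_positive_on :: "'k set \<Rightarrow> ('k \<Rightarrow> 'k \<Rightarrow> real) \<Rightarrow> bool" where
  "completely_positive_on S X \<longleftrightarrow>
     (\<exists>k::nat. k \<ge> 1 \<and> (\<exists>a :: 'k \<Rightarrow> nat \<Rightarrow> real.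
        (\<forall>s\<in>S. \<forall>l<k. 0 \<le> a s l) \<and>
        (\<forall>s\<in>S. \<forall>t\<in>S. X s t = (\<Sum>l<k. a s l * a t l))))"

end

theory Submission imports Defs begin

lemma quad_inner:
  "(\<Sum>s\<in>T. \<Sum>t\<in>T. x s * inner (v s) (v t) * x t) = inner (\<Sum>s\<in>T. x s *\<^sub>R v s) (\<Sum>t\<in>T. x t *\<^sub>R v t)"
  apply (simp add: inner_sum_left inner_sum_right sum_distrib_left mult.commute mult.left_commute)
  apply (subst sum.swap)
  apply (simp add: mult.left_commute)
  done

lemma transfer:
  fixes v :: "'k \<Rightarrow> 'v::real_inner" and k :: nat
  assumes "\<forall>s\<in>T. \<forall>t\<in>T. inner (v s) (v t) = (\<Sum>l<k. a s l * a t l)"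
  shows "(\<Sum>l<k. (\<Sum>t\<in>T. x t * a t l)^2) = inner (\<Sum>t\<in>T. x t *\<^sub>R v t) (\<Sum>t\<in>T. x t *\<^sub>R v t)"
proof -
  have "inner (\<Sum>t\<in>T. x t *\<^sub>R v t) (\<Sum>t\<in>T. x t *\<^sub>R v t) = (\<Sum>s\<in>T. \<Sum>t\<in>T. x s * inner (v s) (v t) * x t)"
    by (simp add: quad_inner)
  also have "\<dots> = (\<Sum>s\<in>T. \<Sum>t\<in>T. \<Sum>l<k. x s * a s l * (x t * a t l))"
  proof (intro sum.cong refl)
    fix s t assume st: "s \<in> T" "t \<in> T"
    have "x s * inner (v s) (v t) * x t = x s * x t * (\<Sum>l<k. a s l * a t l)"
      using assms st by simp
    also have "\<dots> = (\<Sum>l<k. x s * x t * (a s l * a t l))" by (rule sum_distrib_left)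
    also have "\<dots> = (\<Sum>l<k. x s * a s l * (x t * a t l))" by (rule sum.cong) (simp_all add: ac_simps)
    finally show "x s * inner (v s) (v t) * x t = (\<Sum>l<k. x s * a s l * (x t * a t l))" .
  qed
  also have "\<dots> = (\<Sum>s\<in>T. \<Sum>l<k. \<Sum>t\<in>T. x s * a s l * (x t * a t l))"
    by (rule sum.cong[OF refl], rule sum.swap)
  also have "\<dots> = (\<Sum>l<k. \<Sum>s\<in>T. \<Sum>t\<in>T. x s * a s l * (x t * a t l))"
    by (rule sum.swap)
  also have "\<dots> = (\<Sum>l<k. (\<Sum>t\<in>T. x t * a t l)^2)"
    by (simp add: power2_eq_square sum_product)
  finally show ?thesis by simp
qed

lemma transfer0:
  fixes v :: "'k \<Rightarrow> 'v::real_inner" and k :: nat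
  assumes "\<forall>s\<in>T. \<forall>t\<in>T. inner (v s) (v t) = (\<Sum>l<k. a s l * a t l)"
    and "(\<Sum>t\<in>T. x t *\<^sub>R v t) = 0" and "l < k"
  shows "(\<Sum>t\<in>T. x t * a t l) = 0"
proof -
  have h0: "(\<Sum>l<k. (\<Sum>t\<in>T. x t * a t l)^2) = 0" unfolding transfer[OF assms(1), of x] assms(2) by (rule inner_zero_left)
  have "\<forall>l\<in>{..<k}. (\<Sum>t\<in>T. x t * a t l)^2 = 0"
    by (rule iffD1[OF sum_nonneg_eq_0_iff[of "{..<k}" "\<lambda>l. (\<Sum>t\<in>T. x t * a t l)^2"]]) (use h0 in simp_all)
  thus ?thesis using assms(3) by simp
qed


theorem theorem4p10:
  fixes I :: "'i set" and p p' :: "'i \<Rightarrow> real ^ 'd" and c :: "real ^ 'd" and J :: "'i set"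
  assumes "finite I"
    and "c \<noteq> 0"
    and "\<forall>i\<in>I. (1/2) *\<^sub>R (p i + p' i) = c"
    and "\<forall>i\<in>I. inner (p i) (p' i) = 0"
    and "J \<subseteq> I" and "odd (card J)" and "(\<Sum>j\<in>J. p j) = real (card J) *\<^sub>R c"
    and "\<forall>a\<in>I \<times> UNIV. \<forall>b\<in>I \<times> UNIV. 0 \<le> inner (family p p' a) (family p p' b)"
  shows "doubly_nonnegative_on (I \<times> UNIV) (gram (family p p'))
       \<and> \<not> completely_positive_on (I \<times> UNIV) (gram (family p p'))"
proof
  define v where "v = family p p'"
  have pc: "p i + p' i = 2 *\<^sub>R c" if "i \<in> I" for i
  proof -
    have "(1/2) *\<^sub>R (p i + p' i) = c" using assms(3) that by blast
    hence "2 *\<^sub>R ((1/2) *\<^sub>R (p i + p' i)) = 2 *\<^sub>R c" by simp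
    thus ?thesis by simp
  qed
  show "doubly_nonnegative_on (I \<times> UNIV) (gram (family p p'))"
    unfolding doubly_nonnegative_on_def psd_on_def symmetric_on_def gram_def
    using assms(8) by (simp add: inner_commute quad_inner)
  show "\<not> completely_positive_on (I \<times> UNIV) (gram (family p p'))"
  proof
    assume "completely_positive_on (I \<times> UNIV) (gram (family p p'))"
    hence "completely_positive_on (I \<times> UNIV) (gram v)" by (simp add: v_def)
    then obtain k :: nat and a :: "'i \<times> bool \<Rightarrow> nat \<Rightarrow> real" where nn: "\<forall>s\<in>I \<times> UNIV. \<forall>l<k. 0 \<le> a s l"
      and G: "\<forall>s\<in>I \<times> UNIV. \<forall>t\<in>I \<times> UNIV. inner (v s) (v t) = (\<Sum>l<k. a s l * a t l)"
      unfolding completely_positive_on_def gram_def by blast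
    have GT: "\<forall>s\<in>T. \<forall>t\<in>T. inner (v s) (v t) = (\<Sum>l<k. a s l * a t l)" if "T \<subseteq> I \<times> UNIV" for T
      using G that by blast
    have vF: "v (i, False) = p i" and vT: "v (i, True) = p' i" for i
      by (simp_all add: v_def family_def)
    have finJ: "finite J" using assms(1,5) finite_subset by blast
    have "J \<noteq> {}" using assms(6) by auto
    then obtain j0 where j0: "j0 \<in> J" by blast
    have j0I: "j0 \<in> I" using j0 assms(5) by blast
    have orth: "a (i,False) l * a (i,True) l = 0" if "i \<in> I" "l < k" for i l
    proof -
      have h1: "(\<Sum>l<k. a (i,False) l * a (i,True) l) = 0"
      proof -
        have "inner (v (i,False)) (v (i,True)) = (\<Sum>l<k. a (i,False) l * a (i,True) l)"
          using G that by blast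
        thus ?thesis using that assms(4) vF vT by simp
      qed
      have h2: "\<forall>l\<in>{..<k}. 0 \<le> a (i,False) l * a (i,True) l"
        using nn that by simp
      have "\<forall>l\<in>{..<k}. a (i,False) l * a (i,True) l = 0"
        by (rule iffD1[OF sum_nonneg_eq_0_iff[of "{..<k}" "\<lambda>l. a (i,False) l * a (i,True) l"]])
           (use h1 h2 in simp_all)
      thus ?thesis using that by simp
    qed
    have sumeq: "a (i,False) l + a (i,True) l = a (j0,False) l + a (j0,True) l"
      if "i \<in> I" "l < k" for i l
    proof (cases "i = j0")
      case True thus ?thesis by simp
    next
      case False
      define x where "x = (\<lambda>(t::'i, b::bool). if t = i then 1 else (-1::real))"
      have sub: "{i, j0} \<times> (UNIV::bool set) \<subseteq> I \<times> UNIV" using that j0I by blast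
      have "(\<Sum>t\<in>{i, j0} \<times> UNIV. x t *\<^sub>R v t) = (p i + p' i) - (p j0 + p' j0)"
        using False by (simp add: sum.cartesian_product' UNIV_bool x_def vF vT algebra_simps)
      also have "\<dots> = 0" using pc that j0I by simp
      finally have "(\<Sum>t\<in>{i, j0} \<times> UNIV. x t * a t l) = 0"
        using transfer0[OF GT[OF sub]] that by blast
      thus ?thesis
        using False by (simp add: sum.cartesian_product' UNIV_bool x_def algebra_simps)
    qed
    have Jrel: "(\<Sum>j\<in>J. a (j,False) l - a (j,True) l) = 0" if "l < k" for l
    proof -
      define x where "x = (\<lambda>(t::'i, b::bool). if b then (-1::real) else 1)"
      have sub: "J \<times> (UNIV::bool set) \<subseteq> I \<times> UNIV" using assms(5) by blast
      have "(\<Sum>j\<in>J. p' j) = (\<Sum>j\<in>J. 2 *\<^sub>R c - p j)"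
        by (rule sum.cong) (use pc assms(5) in \<open>auto simp: algebra_simps\<close>)
      also have "\<dots> = real (card J) *\<^sub>R (2 *\<^sub>R c) - real (card J) *\<^sub>R c"
        using assms(7) by (simp only: sum_subtractf sum_constant_scaleR)
      also have "\<dots> = real (card J) *\<^sub>R c"
      proof -
        have h: "(2::real) *\<^sub>R c - c = c" by (simp add: scaleR_2)
        have "real (card J) *\<^sub>R (2 *\<^sub>R c) - real (card J) *\<^sub>R c = real (card J) *\<^sub>R (2 *\<^sub>R c - c)"
          by (rule scaleR_diff_right[symmetric])
        thus ?thesis by (simp only: h)
      qed
      finally have p'J: "(\<Sum>j\<in>J. p' j) = real (card J) *\<^sub>R c" .
      have "(\<Sum>t\<in>J \<times> UNIV. x t *\<^sub>R v t) = (\<Sum>j\<in>J. p j) - (\<Sum>j\<in>J. p' j)"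
        by (simp add: sum.cartesian_product' UNIV_bool x_def vF vT sum_subtractf)
      also have "\<dots> = 0" using assms(7) p'J by simp
      finally have "(\<Sum>t\<in>J \<times> UNIV. x t * a t l) = 0"
        using transfer0[OF GT[OF sub]] that by blast
      thus ?thesis
        by (simp add: sum.cartesian_product' UNIV_bool x_def sum_subtractf)
    qed
    have zero: "a (j0,False) l + a (j0,True) l = 0" if "l < k" for l
    proof (rule ccontr)
      define s where "s = a (j0,False) l + a (j0,True) l"
      assume "\<not> ?thesis"
      hence s0: "s \<noteq> 0" by (simp add: s_def)
      define J2 where "J2 = {j\<in>J. a (j,False) l = 0}"
      have J2s: "J2 \<subseteq> J" by (auto simp: J2_def)
      have "(\<Sum>j\<in>J. a (j,False) l - a (j,True) l)
          = (\<Sum>j\<in>J - J2. a (j,False) l - a (j,True) l) + (\<Sum>j\<in>J2. a (j,False) l - a (j,True) l)"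
        by (rule sum.subset_diff[OF J2s finJ])
      also have "(\<Sum>j\<in>J - J2. a (j,False) l - a (j,True) l) = (\<Sum>j\<in>J - J2. s)"
      proof (rule sum.cong)
        fix j assume "j \<in> J - J2"
        hence jI: "j \<in> I" and ne: "a (j,False) l \<noteq> 0" using assms(5) by (auto simp: J2_def)
        have "a (j,True) l = 0" using orth[OF jI that] ne by simp
        thus "a (j,False) l - a (j,True) l = s" using sumeq[OF jI that] s_def by simp
      qed simp
      also have "(\<Sum>j\<in>J2. a (j,False) l - a (j,True) l) = (\<Sum>j\<in>J2. - s)"
      proof (rule sum.cong)
        fix j assume "j \<in> J2"
        hence jI: "j \<in> I" and ne: "a (j,False) l = 0" using assms(5) by (auto simp: J2_def)
        thus "a (j,False) l - a (j,True) l = - s" using sumeq[OF jI that] s_def by simp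
      qed simp
      finally have "real (card (J - J2)) * s - real (card J2) * s = 0" using Jrel[OF that] by simp
      hence "(real (card (J - J2)) - real (card J2)) * s = 0" by (simp add: left_diff_distrib)
      hence "real (card (J - J2)) = real (card J2)" using s0 by simp
      hence "card (J - J2) = card J2" by simp
      moreover have "card J = card (J - J2) + card J2"
        using card_Diff_subset[OF finite_subset[OF J2s finJ] J2s] card_mono[OF finJ J2s] by simp
      ultimately have "card J = 2 * card J2" by simp
      thus False using assms(6) by simp
    qed
    have sub0: "{j0} \<times> (UNIV::bool set) \<subseteq> I \<times> UNIV" using j0I by blast
    have "(\<Sum>l<k. (\<Sum>t\<in>{j0} \<times> UNIV. (\<lambda>_. 1::real) t * a t l)^2)
        = inner (\<Sum>t\<in>{j0} \<times> UNIV. (\<lambda>_. 1::real) t *\<^sub>R v t) (\<Sum>t\<in>{j0} \<times> UNIV. (\<lambda>_. 1::real) t *\<^sub>R v t)"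
      by (rule transfer[OF GT[OF sub0]])
    hence "(\<Sum>l<k. (a (j0,False) l + a (j0,True) l)^2) = inner (p j0 + p' j0) (p j0 + p' j0)"
      by (simp add: sum.cartesian_product' UNIV_bool vF vT add.commute)
    also have "\<dots> = inner (2 *\<^sub>R c) (2 *\<^sub>R c)" using pc[OF j0I] by (simp only:)
    also have "\<dots> = 2 * (2 * inner c c)" by (simp only: inner_scaleR_left inner_scaleR_right)
    also have "\<dots> = 4 * inner c c" by simp
    finally have "(\<Sum>l<k. (a (j0,False) l + a (j0,True) l)^2) = 4 * inner c c" .
    moreover have "(\<Sum>l<k. (a (j0,False) l + a (j0,True) l)^2) = 0" using zero by simp
    ultimately show False using assms(2) by simp
  qed
qed

end
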